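(* Let $G$ be a finite group and let $H\le K$ be core-free subgroups of $G$ with $|G:K|\ge2$. Then \[ \frac{\mathbf{m}(G\circlearrowright G/H)}{|K:H|}\le\mathbf{m}(G\circlearrowright G/K)\le\mathbf{m}(G\circlearrowright G/H). \]
   Context: For a core-free subgroup $L$ of $G$, $G\circlearrowright G/L$ denotes the (faithful, transitive) permutation group induced by the action of $G$ on the set $G/L$ of right cosets of $L$ by right multiplication. For a transitive permutation group $X$ on a finite set $\Omega$ with $|\Omega|\ge2$, a subset $A\subseteq\Omega$ is self-separable for $X$ if there exists $x\in X$ with $A\cap A^x=\emptyset$; $\mathbf{m}(X)$ is the minimum cardinality of a subset of $\Omega$ that is not self-separable for $X$. *)

theory Defs
  imports "HOL-Algebra.Algebra"
begin

definition core_free :: "('a, 'b) monoid_scheme \<Rightarrow> 'a set \<Rightarrow> bool" where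
  "core_free G L \<longleftrightarrow>
     (\<Inter>g\<in>carrier G. (inv\<^bsub>G\<^esub> g) <#\<^bsub>G\<^esub> (L #>\<^bsub>G\<^esub> g)) = {\<one>\<^bsub>G\<^esub>}"

definition coset_img :: "('a, 'b) monoid_scheme \<Rightarrow> 'a set set \<Rightarrow> 'a \<Rightarrow> 'a set set" where
  "coset_img G A x = (\<lambda>c. c #>\<^bsub>G\<^esub> x) ` A"

definition self_separable :: "('a, 'b) monoid_scheme \<Rightarrow> 'a set set \<Rightarrow> bool" where
  "self_separable G A \<longleftrightarrow> (\<exists>x\<in>carrier G. A \<inter> coset_img G A x = {})"

definition m_coset :: "('a, 'b) monoid_scheme \<Rightarrow> 'a set \<Rightarrow> nat" where
  "m_coset G L = (LEAST n. \<exists>A. A \<subseteq> rcosets\<^bsub>G\<^esub> L \<and> card A = n \<and> \<not> self_separable G A)"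

end

theory Submission
  imports Defs
begin

lemma (in group) kset_H:
  assumes "subgroup H G" "subgroup K G" "H \<subseteq> K"
  shows "K <#> H = K"
proof
  show "K <#> H \<subseteq> K"
    using assms by (auto simp: set_mult_def intro: subgroup.m_closed)
  show "K \<subseteq> K <#> H"
  proof
    fix k assume "k \<in> K"
    then have "k = k \<otimes> \<one>" using assms(2) subgroup.mem_carrier by fastforce
    then show "k \<in> K <#> H" using \<open>k \<in> K\<close> assms(1) subgroup.one_closed
      unfolding set_mult_def by fastforce
  qed
qed

lemma (in group) pi_coset:
  assumes "subgroup H G" "subgroup K G" "H \<subseteq> K" "g \<in> carrier G"
  shows "K <#> (H #> g) = K #> g"
  using setmult_rcos_assoc[of K H g] assms kset_H subgroup.subset by metis

lemma (in group) pi_act: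
  assumes "subgroup H G" "subgroup K G" "H \<subseteq> K" "a \<in> rcosets H" "x \<in> carrier G"
  shows "K <#> (a #> x) = (K <#> a) #> x"
proof -
  obtain g where g: "g \<in> carrier G" "a = H #> g" using assms(4) unfolding RCOSETS_def by auto
  have "a #> x = H #> (g \<otimes> x)" using g assms coset_mult_assoc subgroup.subset by metis
  then have "K <#> (a #> x) = K #> (g \<otimes> x)" using pi_coset assms g by simp
  also have "\<dots> = (K #> g) #> x" using coset_mult_assoc assms g subgroup.subset by metis
  also have "\<dots> = (K <#> a) #> x" using pi_coset assms g by simp
  finally show ?thesis .
qed

lemma (in group) card_union_rcosets:
  assumes "subgroup H G" "finite (carrier G)" "A \<subseteq> rcosets H"
  shows "card H * card A = card (\<Union>A)"
proof (rule card_partition)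
  have "rcosets H \<subseteq> Pow (carrier G)"
    using assms(1) subgroup.rcosets_carrier is_group by blast
  then show "finite A" using assms finite_subset by (metis finite_Pow_iff)
  show "finite (\<Union>A)" using \<open>rcosets H \<subseteq> Pow (carrier G)\<close> assms
    by (meson Sup_le_iff PowD finite_subset subset_eq)
  show "\<And>c. c \<in> A \<Longrightarrow> card c = card H"
    using assms card_rcosets_equal subgroup.subset by (metis subsetD)
  show "\<And>c1 c2. c1 \<in> A \<Longrightarrow> c2 \<in> A \<Longrightarrow> c1 \<noteq> c2 \<Longrightarrow> c1 \<inter> c2 = {}"
    using rcos_disjoint[OF assms(1)] assms(3) unfolding pairwise_def disjnt_def by blast
qed

lemma (in group) finite_rcosets':
  assumes "subgroup H G" "finite (carrier G)"
  shows "finite (rcosets H)"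
proof -
  have "rcosets H \<subseteq> Pow (carrier G)"
    using assms(1) subgroup.rcosets_carrier is_group by blast
  then show ?thesis using assms finite_subset by (metis finite_Pow_iff)
qed

lemma (in group) m_exists:
  assumes "subgroup H G" "finite (carrier G)"
  shows "\<exists>A. A \<subseteq> rcosets H \<and> card A = m_coset G H \<and> \<not> self_separable G A"
proof -
  have ex: "\<exists>n A. A \<subseteq> rcosets H \<and> card A = n \<and> \<not> self_separable G A"
  proof (intro exI conjI)
    show "rcosets H \<subseteq> rcosets H" by simp
    show "\<not> self_separable G (rcosets H)"
      unfolding self_separable_def coset_img_def
    proof
      assume "\<exists>x\<in>carrier G. (rcosets H) \<inter> ((\<lambda>c. c #> x) ` (rcosets H)) = {}"
      then obtain x where x: "x \<in> carrier G" "(rcosets H) \<inter> ((\<lambda>c. c #> x) ` (rcosets H)) = {}" by blast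
      have "H #> inv x \<in> rcosets H" using x rcosetsI assms subgroup.subset by blast
      moreover have "(H #> inv x) #> x = H #> \<one>"
        using coset_mult_assoc x assms subgroup.subset by (metis inv_closed l_inv)
      moreover have "H #> \<one> \<in> rcosets H" using rcosetsI assms subgroup.subset by blast
      ultimately show False using x by blast
    qed
  qed simp
  show ?thesis unfolding m_coset_def using LeastI_ex[OF ex] by blast
qed

lemma (in group) mainlem:
  fixes H K :: "'a set"
  assumes "True" and "finite (carrier G)"
    and "subgroup H G" and "subgroup K G" and "H \<subseteq> K"
    and "core_free G H" and "core_free G K"
    and "card (rcosets\<^bsub>G\<^esub> K) \<ge> 2"
  shows "real (m_coset G H) / (real (card K) / real (card H)) \<le> real (m_coset G K)
       \<and> m_coset G K \<le> m_coset G H"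
proof
  note fin = assms(2)
  note HG = assms(3) and KG = assms(4) and HK = assms(5)
  have cH: "card H > 0" using HG fin
    by (metis card_gt_0_iff empty_iff finite_subset subgroup.one_closed subgroup.subset)
  have cK: "card K > 0" using KG fin
    by (metis card_gt_0_iff empty_iff finite_subset subgroup.one_closed subgroup.subset)
  show "m_coset G K \<le> m_coset G H"
  proof -
    obtain A where A: "A \<subseteq> rcosets H" "card A = m_coset G H" "\<not> self_separable G A"
      using m_exists[OF HG fin] by blast
    define B where "B = (\<lambda>a. K <#> a) ` A"
    have Bsub: "B \<subseteq> rcosets K"
    proof
      fix b assume "b \<in> B"
      then obtain a where a: "a \<in> A" "b = K <#> a" unfolding B_def by blast
      then obtain g where g: "g \<in> carrier G" "a = H #> g" using A(1) unfolding RCOSETS_def by auto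
      then have "b = K #> g" using pi_coset HG KG HK a by simp
      then show "b \<in> rcosets K" using rcosetsI KG subgroup.subset g by blast
    qed
    have "\<not> self_separable G B"
      unfolding self_separable_def
    proof
      assume "\<exists>x\<in>carrier G. B \<inter> coset_img G B x = {}"
      then obtain x where x: "x \<in> carrier G" "B \<inter> coset_img G B x = {}" by blast
      have "A \<inter> coset_img G A x \<noteq> {}" using A(3) x(1) unfolding self_separable_def by blast
      then obtain a' where a': "a' \<in> A" "a' #> x \<in> A" unfolding coset_img_def by blast
      have m1: "K <#> (a' #> x) \<in> B" using a' B_def by blast
      have m2: "K <#> (a' #> x) = (K <#> a') #> x" using pi_act HG KG HK a' A(1) x by blast
      have m3: "(K <#> a') #> x \<in> coset_img G B x" unfolding coset_img_def B_def using a'(1) by blast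
      have "(K <#> a') #> x \<in> B" using m1 m2 by simp
      then show False using x(2) m3 by (metis IntI empty_iff)
    qed
    then have "m_coset G K \<le> card B" unfolding m_coset_def using Bsub by (intro Least_le) blast
    also have "card B \<le> card A" unfolding B_def
      using card_image_le finite_subset[OF A(1) finite_rcosets'[OF HG fin]] by blast
    finally show ?thesis using A by simp
  qed
  show "real (m_coset G H) / (real (card K) / real (card H)) \<le> real (m_coset G K)"
  proof -
    obtain B where B: "B \<subseteq> rcosets K" "card B = m_coset G K" "\<not> self_separable G B"
      using m_exists[OF KG fin] by blast
    define A where "A = {c \<in> rcosets H. \<exists>b\<in>B. c \<subseteq> b}"
    have Asub: "A \<subseteq> rcosets H" unfolding A_def by blast
    have U: "\<Union>A = \<Union>B"
    proof
      show "\<Union>A \<subseteq> \<Union>B" unfolding A_def by blast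
      show "\<Union>B \<subseteq> \<Union>A"
      proof
        fix y assume "y \<in> \<Union>B"
        then obtain b where b: "b \<in> B" "y \<in> b" by blast
        then obtain g where g: "g \<in> carrier G" "b = K #> g" using B(1) unfolding RCOSETS_def by auto
        have yc: "y \<in> carrier G" using b g KG subgroup.subset unfolding r_coset_def by blast
        have "K #> g = K #> y" using repr_independence b g KG by blast
        moreover have "H #> y \<subseteq> K #> y" using HK unfolding r_coset_def by blast
        ultimately have "H #> y \<in> A" unfolding A_def using rcosetsI HG subgroup.subset yc b g by blast
        moreover have "y \<in> H #> y" using rcos_self yc HG by blast
        ultimately show "y \<in> \<Union>A" by blast
      qed
    qed
    have "card H * card A = card K * card B"
      using card_union_rcosets[OF HG fin Asub] card_union_rcosets[OF KG fin B(1)] U by simp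
    have "\<not> self_separable G A"
      unfolding self_separable_def
    proof
      assume "\<exists>x\<in>carrier G. A \<inter> coset_img G A x = {}"
      then obtain x where x: "x \<in> carrier G" "A \<inter> coset_img G A x = {}" by blast
      have "B \<inter> coset_img G B x \<noteq> {}" using B(3) x(1) unfolding self_separable_def by blast
      then obtain b' where b': "b' \<in> B" "b' #> x \<in> B" unfolding coset_img_def by blast
      obtain g where g: "g \<in> carrier G" "b' #> x = K #> g" using b' B(1) unfolding RCOSETS_def by auto
      obtain g' where g': "g' \<in> carrier G" "b' = K #> g'" using b' B(1) unfolding RCOSETS_def by auto
      have Ks: "K \<subseteq> carrier G" using KG subgroup.subset by blast
      have Hs: "H \<subseteq> carrier G" using HG subgroup.subset by blast
      have "b' = (b' #> x) #> inv x"
        using g' x Ks coset_mult_assoc by (simp add: m_assoc)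
      also have "\<dots> = K #> (g \<otimes> inv x)" using g Ks x coset_mult_assoc by simp
      finally have b'eq: "b' = K #> (g \<otimes> inv x)" .
      have s1: "H #> g \<subseteq> K #> g" using HK unfolding r_coset_def by blast
      have s2: "H #> (g \<otimes> inv x) \<subseteq> K #> (g \<otimes> inv x)" using HK unfolding r_coset_def by blast
      have c1: "H #> g \<in> A" unfolding A_def
      proof (intro CollectI conjI bexI)
        show "H #> g \<in> rcosets H" using rcosetsI[OF Hs g(1)] .
        show "H #> g \<subseteq> b' #> x" using s1 g(2) by simp
        show "b' #> x \<in> B" using b'(2) .
      qed
      have gx: "g \<otimes> inv x \<in> carrier G" using g(1) x(1) by simp
      have c2: "H #> (g \<otimes> inv x) \<in> A" unfolding A_def
      proof (intro CollectI conjI bexI)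
        show "H #> (g \<otimes> inv x) \<in> rcosets H" using rcosetsI[OF Hs gx] .
        show "H #> (g \<otimes> inv x) \<subseteq> b'" using s2 b'eq by simp
        show "b' \<in> B" using b'(1) .
      qed
      have "(H #> (g \<otimes> inv x)) #> x = H #> g"
        using coset_mult_assoc Hs g x by (simp add: m_assoc)
      then have m3: "H #> g \<in> coset_img G A x" unfolding coset_img_def using c2 by (metis image_eqI)
      then show False using c1 x(2) by (metis IntI empty_iff)
    qed
    then have "m_coset G H \<le> card A" unfolding m_coset_def using Asub by (intro Least_le) blast
    then have "real (m_coset G H) * real (card H) \<le> real (card K) * real (card B)"
      using \<open>card H * card A = card K * card B\<close> cH
      by (metis of_nat_le_iff of_nat_mult mult.commute mult_le_mono1)
    then show ?thesis using cH cK B(2) by (simp add: field_simps)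
  qed
qed

theorem lemma3p3:
  fixes G :: "('a, 'b) monoid_scheme" and H K :: "'a set"
  assumes "group G" and "finite (carrier G)"
    and "subgroup H G" and "subgroup K G" and "H \<subseteq> K"
    and "core_free G H" and "core_free G K"
    and "card (rcosets\<^bsub>G\<^esub> K) \<ge> 2"
  shows "real (m_coset G H) / (real (card K) / real (card H)) \<le> real (m_coset G K)
       \<and> m_coset G K \<le> m_coset G H"
  using group.mainlem[OF assms(1) TrueI assms(2-8)] .

end
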